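(* Let $x \in (0,1)$ have regular continued fraction expansion $x = [x_1,x_2,x_3,\ldots]$. Then for each $j \ge 1$, \[ R^{x_2+x_4+\cdots+x_{2j}}(x) = [x_{2j+1}+1, x_{2j+2}, x_{2j+3},\ldots], \] and if $0 < \ell < x_{2j}$, then \[ R^{x_2+x_4+\cdots+x_{2j-2}+\ell}(x) = [1, x_{2j}-\ell, x_{2j+1}, x_{2j+2},\ldots]. \]
   Context: $[a_1,a_2,a_3,\ldots]$ denotes the regular continued fraction $\cfrac{1}{a_1+\cfrac{1}{a_2+\cdots}}$ with positive integer digits. The Gauss map $G:[0,1]\to[0,1]$ is $G(0)=0$, $G(x)=\frac1x-\lfloor\frac1x\rfloor$ for $x\neq0$, and $R:[0,1]\to[0,1]$ is defined by $R(x) = 1-G(x)$. *)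

theory Defs
  imports Complex_Main
begin

definition gauss :: "real \<Rightarrow> real" where
  "gauss x = (if x = 0 then 0 else 1 / x - of_int \<lfloor>1 / x\<rfloor>)"

definition Rmap :: "real \<Rightarrow> real" where
  "Rmap x = 1 - gauss x"

fun cf_fin :: "(nat \<Rightarrow> nat) \<Rightarrow> nat \<Rightarrow> real" where
  "cf_fin a 0 = 0"
| "cf_fin a (Suc n) = 1 / (real (a 0) + cf_fin (\<lambda>k. a (Suc k)) n)"

text \<open>Value of the infinite regular continued fraction [a 0, a 1, a 2, ...]
  (digits indexed from 0 here), as the limit of its convergents.\<close>
definition cfrac :: "(nat \<Rightarrow> nat) \<Rightarrow> real" where
  "cfrac a = lim (\<lambda>n. cf_fin a n)"

end

theory Submission imports Defs begin

fun gg :: "(nat \<Rightarrow> nat) \<Rightarrow> nat \<Rightarrow> real \<Rightarrow> real" where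
  "gg a 0 y = y"
| "gg a (Suc n) y = 1 / (real (a 0) + gg (\<lambda>k. a (Suc k)) n y)"

lemma cf_fin_gg: "cf_fin a n = gg a n 0"
  by (induction n arbitrary: a) auto

lemma gg_nonneg: "y \<ge> 0 \<Longrightarrow> gg a n y \<ge> 0"
  by (induction n arbitrary: a) auto

lemma gg_le1: "(\<And>k. a k > 0) \<Longrightarrow> 0 \<le> y \<Longrightarrow> y \<le> 1 \<Longrightarrow> gg a n y \<le> 1"
proof (induction n arbitrary: a)
  case 0 then show ?case by simp
next
  case (Suc n)
  have "real (a 0) \<ge> 1" using Suc.prems(1)[of 0] by linarith
  moreover have "gg (\<lambda>k. a (Suc k)) n y \<ge> 0" using gg_nonneg Suc.prems by blast
  ultimately show ?case by simp
qed

lemma gg_add: "gg a (n + m) y = gg a n (gg (\<lambda>k. a (k + n)) m y)"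
  by (induction n arbitrary: a) auto

lemma p: fixes a b y :: real assumes "a \<ge> 1" "b \<ge> 1" "y \<ge> 0" shows "a*(b+y)+1 \<ge> 2"
proof -
  have "a*(b+y) \<ge> 1*1" using assms by (intro mult_mono) auto
  then show ?thesis by simp
qed
lemma two_step:
  fixes a b y z :: real
  assumes "a \<ge> 1" "b \<ge> 1" "y \<ge> 0" "z \<ge> 0"
  shows "\<bar>1/(a + 1/(b+y)) - 1/(a + 1/(b+z))\<bar> \<le> \<bar>y - z\<bar> / 4"
proof -
  have e1: "1/(a + 1/(b+y)) = (b+y)/(a*(b+y)+1)" using assms by (simp add: field_simps)
  have e2: "1/(a + 1/(b+z)) = (b+z)/(a*(b+z)+1)" using assms by (simp add: field_simps)
  have p1: "a*(b+y)+1 \<ge> 2" using assms p by blast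
  have p2: "a*(b+z)+1 \<ge> 2" using assms p by blast
  have "(b+y)/(a*(b+y)+1) - (b+z)/(a*(b+z)+1) = ((b+y)*(a*(b+z)+1) - (b+z)*(a*(b+y)+1))/((a*(b+y)+1)*(a*(b+z)+1))"
    using p1 p2 by (simp add: diff_frac_eq)
  also have "(b+y)*(a*(b+z)+1) - (b+z)*(a*(b+y)+1) = y - z" by (simp add: algebra_simps)
  finally have eq: "(b+y)/(a*(b+y)+1) - (b+z)/(a*(b+z)+1) = (y - z)/((a*(b+y)+1)*(a*(b+z)+1))" .
  have g4: "(a*(b+y)+1)*(a*(b+z)+1) \<ge> 2*2" using p1 p2 by (intro mult_mono) auto
  have "\<bar>(b+y)/(a*(b+y)+1) - (b+z)/(a*(b+z)+1)\<bar> = \<bar>y-z\<bar>/((a*(b+y)+1)*(a*(b+z)+1))"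
    using eq g4 by (simp add: abs_divide)
  also have "\<dots> \<le> \<bar>y-z\<bar>/4"
    using g4 by (intro divide_left_mono) auto
  finally show ?thesis using e1 e2 by simp
qed

lemma one_step:
  fixes a y z :: real
  assumes "a \<ge> 1" "y \<ge> 0" "z \<ge> 0"
  shows "\<bar>1/(a+y) - 1/(a+z)\<bar> \<le> \<bar>y - z\<bar>"
proof -
  have "1/(a+y) - 1/(a+z) = (z - y)/((a+y)*(a+z))" using assms by (simp add: field_simps)
  moreover have "(a+y)*(a+z) \<ge> 1*1" using assms by (intro mult_mono) auto
  ultimately have "\<bar>1/(a+y) - 1/(a+z)\<bar> = \<bar>z-y\<bar>/((a+y)*(a+z))" using assms by (simp add: abs_divide abs_mult)
  also have "\<dots> \<le> \<bar>z-y\<bar>/1"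
    using \<open>(a+y)*(a+z) \<ge> 1*1\<close> by (intro divide_left_mono) auto
  finally show ?thesis by simp
qed

lemma gg_lip:
  assumes "\<And>k. a k > 0" "y \<ge> 0" "z \<ge> 0"
  shows "\<bar>gg a n y - gg a n z\<bar> \<le> 2 * (1/2)^n * \<bar>y - z\<bar>"
  using assms
proof (induction n arbitrary: a rule: less_induct)
  case (less n)
  show ?case
  proof (cases n)
    case 0 then show ?thesis by simp
  next
    case (Suc m)
    show ?thesis
    proof (cases m)
      case 0
      have "real (a 0) \<ge> 1" using less.prems(1)[of 0] by linarith
      then show ?thesis using Suc 0 one_step[of "real (a 0)" y z] less.prems by simp
    next
      case (Suc p)
      define b where "b = (\<lambda>k. a (Suc (Suc k)))"
      have bp: "\<And>k. b k > 0" using less.prems(1) by (simp add: b_def)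
      have n: "n = Suc (Suc p)" using Suc \<open>n = Suc m\<close> by simp
      have a0: "real (a 0) \<ge> 1" using less.prems(1)[of 0] by linarith
      have a1: "real (a 1) \<ge> 1" using less.prems(1)[of 1] by linarith
      have IH: "\<bar>gg b p y - gg b p z\<bar> \<le> 2 * (1/2)^p * \<bar>y - z\<bar>"
        using less.IH[of p b] n bp less.prems by simp
      have "\<bar>gg a n y - gg a n z\<bar> = \<bar>1/(real (a 0) + 1/(real (a 1) + gg b p y)) - 1/(real (a 0) + 1/(real (a 1) + gg b p z))\<bar>"
        using n by (simp add: b_def)
      also have "\<dots> \<le> \<bar>gg b p y - gg b p z\<bar> / 4"
        using two_step[OF a0 a1 gg_nonneg gg_nonneg] less.prems by simp
      also have "\<dots> \<le> 2 * (1/2)^p * \<bar>y - z\<bar> / 4" by (rule divide_right_mono[OF IH]) simp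
      also have "\<dots> = 2 * (1/2)^n * \<bar>y - z\<bar>" using n by simp
      finally show ?thesis .
    qed
  qed
qed

lemma cf_conv:
  assumes pos: "\<And>k. a k > 0"
  shows "convergent (cf_fin a)"
proof -
  have "Cauchy (cf_fin a)"
    unfolding Cauchy_altdef2
  proof (intro allI impI)
    fix e :: real assume e: "e > 0"
    obtain N where N: "(1/2::real)^N < e/2" using real_arch_pow_inv[of "e/2" "1/2::real"] e by auto
    show "\<exists>N. \<forall>n\<ge>N. dist (cf_fin a n) (cf_fin a N) < e"
    proof (intro exI allI impI)
      fix n assume "n \<ge> N"
      then obtain d where n: "n = N + d" using le_Suc_ex by blast
      define w where "w = gg (\<lambda>k. a (k + N)) d 0"
      have w0: "w \<ge> 0" unfolding w_def by (rule gg_nonneg) simp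
      have w1: "w \<le> 1" unfolding w_def by (rule gg_le1) (use pos in auto)
      have c1: "cf_fin a n = gg a N w" unfolding cf_fin_gg n w_def by (rule gg_add)
      have c2: "cf_fin a N = gg a N 0" by (rule cf_fin_gg)
      have "dist (cf_fin a n) (cf_fin a N) = \<bar>gg a N w - gg a N 0\<bar>"
        unfolding c1 c2 dist_real_def ..
      also have "\<dots> \<le> 2 * (1/2)^N * \<bar>w - 0\<bar>" by (rule gg_lip) (use pos w0 in auto)
      also have "\<dots> \<le> 2 * (1/2)^N" using w0 w1 by simp
      also have "\<dots> < e" using N by simp
      finally show "dist (cf_fin a n) (cf_fin a N) < e" .
    qed
  qed
  then show ?thesis by (simp add: Cauchy_convergent_iff)
qed

lemma cfrac_nonneg: assumes "\<And>k. a k > 0" shows "cfrac a \<ge> 0"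
proof -
  have L: "cf_fin a \<longlonglongrightarrow> cfrac a"
    unfolding cfrac_def using cf_conv[OF assms] by (simp add: convergent_LIMSEQ_iff)
  have "\<forall>n\<ge>0. 0 \<le> cf_fin a n" by (simp add: cf_fin_gg gg_nonneg)
  then show ?thesis using LIMSEQ_le_const[OF L] by blast
qed

lemma cfrac_rec:
  assumes pos: "\<And>k. a k > 0"
  shows "cfrac a = 1 / (real (a 0) + cfrac (\<lambda>k. a (Suc k)))"
proof -
  have ps: "\<And>k. (\<lambda>k. a (Suc k)) k > 0" using pos by simp
  have L: "cf_fin (\<lambda>k. a (Suc k)) \<longlonglongrightarrow> cfrac (\<lambda>k. a (Suc k))"
    unfolding cfrac_def using cf_conv[OF ps] by (simp add: convergent_LIMSEQ_iff)
  have nz: "real (a 0) + cfrac (\<lambda>k. a (Suc k)) \<noteq> 0"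
  proof -
    have c0: "cfrac (\<lambda>k. a (Suc k)) \<ge> 0" by (rule cfrac_nonneg) (rule pos)
    have "real (a 0) > 0" using pos[of 0] by simp
    then show ?thesis using c0 by linarith
  qed
  have "(\<lambda>n. cf_fin a (Suc n)) \<longlonglongrightarrow> 1 / (real (a 0) + cfrac (\<lambda>k. a (Suc k)))"
    using tendsto_divide[OF tendsto_const tendsto_add[OF tendsto_const L] nz] by simp
  then have "cf_fin a \<longlonglongrightarrow> 1 / (real (a 0) + cfrac (\<lambda>k. a (Suc k)))"
    by (rule LIMSEQ_imp_Suc)
  then show ?thesis unfolding cfrac_def by (rule limI)
qed

lemma cfrac_pos: assumes "\<And>k. a k > 0" shows "cfrac a > 0"
proof -
  have c0: "cfrac (\<lambda>k. a (Suc k)) \<ge> 0" by (rule cfrac_nonneg) (rule assms)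
  have "real (a 0) > 0" using assms[of 0] by simp
  then have "1 / (real (a 0) + cfrac (\<lambda>k. a (Suc k))) > 0" using c0 by (intro divide_pos_pos) linarith+
  then show ?thesis by (subst cfrac_rec[OF assms])
qed


lemma cfrac_lt1:
  assumes "\<And>k. a k > 0" shows "cfrac a < 1"
proof -
  have c0: "cfrac (\<lambda>k. a (Suc k)) > 0" by (rule cfrac_pos) (rule assms)
  have "real (a 0) \<ge> 1" using assms[of 0] by linarith
  then have "real (a 0) + cfrac (\<lambda>k. a (Suc k)) > 1" using c0 by linarith
  then have "1 / (real (a 0) + cfrac (\<lambda>k. a (Suc k))) < 1" by simp
  then show ?thesis by (subst cfrac_rec[OF assms])
qed

lemma gauss_cfrac:
  assumes pos: "\<And>k. a k > 0"
  shows "gauss (cfrac a) = cfrac (\<lambda>k. a (Suc k))"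
proof -
  define t where "t = cfrac (\<lambda>k. a (Suc k))"
  have t0: "t > 0" unfolding t_def by (rule cfrac_pos) (rule pos)
  have t1: "t < 1" unfolding t_def by (rule cfrac_lt1) (rule pos)
  have ca: "cfrac a = 1 / (real (a 0) + t)" unfolding t_def by (rule cfrac_rec[OF pos])
  have d: "real (a 0) + t > 0" using t0 by simp
  have inv: "1 / cfrac a = real (a 0) + t" using ca d by simp
  have fl: "\<lfloor>real (a 0) + t\<rfloor> = int (a 0)" using t0 t1 by (simp add: floor_eq_iff)
  have "cfrac a \<noteq> 0" using ca d by simp
  then have "gauss (cfrac a) = 1 / cfrac a - of_int \<lfloor>1 / cfrac a\<rfloor>" by (simp add: gauss_def)
  also have "\<dots> = t" unfolding inv fl by simp
  finally show ?thesis unfolding t_def .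
qed

lemma R1:
  assumes pos: "\<And>k. a k > 0" and a1: "a 1 \<ge> 2"
  shows "Rmap (cfrac a) = cfrac (\<lambda>k. if k = 0 then 1 else if k = 1 then a 1 - 1 else a k)"
proof -
  define c where "c = (\<lambda>k::nat. if k = 0 then 1 else if k = 1 then a 1 - 1 else a k)"
  define c' where "c' = (\<lambda>k. c (Suc k))"
  define b where "b = (\<lambda>k. a (Suc k))"
  define b' where "b' = (\<lambda>k. a (Suc (Suc k)))"
  have cp: "\<And>k. c k > 0" using pos a1 by (auto simp: c_def)
  have cp1: "\<And>k. c' k > 0" using cp by (simp add: c'_def)
  have p1: "\<And>k. b k > 0" using pos by (simp add: b_def)
  have c'b': "(\<lambda>k. c' (Suc k)) = b'" by (rule ext) (simp add: c'_def c_def b'_def)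
  have bb': "(\<lambda>k. b (Suc k)) = b'" by (rule ext) (simp add: b_def b'_def)
  define s where "s = cfrac b'"
  have s0: "s \<ge> 0" unfolding s_def b'_def by (rule cfrac_nonneg) (rule pos)
  have e1: "cfrac c = 1 / (1 + cfrac c')"
    using cfrac_rec[of "c", OF cp] unfolding c'_def by (simp add: c_def)
  have e2: "cfrac c' = 1 / (real (a 1 - 1) + s)"
    using cfrac_rec[of "c'", OF cp1] unfolding c'b' s_def by (simp add: c'_def c_def)
  have e3: "cfrac b = 1 / (real (a 1) + s)"
    using cfrac_rec[of "b", OF p1] unfolding bb' s_def by (simp add: b_def)
  have r: "real (a 1 - 1) = real (a 1) - 1" using a1 by (simp add: of_nat_diff)
  have a1r: "real (a 1) \<ge> 2" using a1 by simp
  have "Rmap (cfrac a) = 1 - 1 / (real (a 1) + s)"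
    unfolding Rmap_def gauss_cfrac[of a, OF pos] e3[unfolded b_def] ..
  also have "\<dots> = 1 / (1 + 1 / (real (a 1) - 1 + s))"
    using a1r s0 by (simp add: field_simps)
  finally show ?thesis unfolding c_def[symmetric] e1 e2 r .
qed

lemma R2:
  assumes pos: "\<And>k. a k > 0" and a1: "a 1 = 1"
  shows "Rmap (cfrac a) = cfrac (\<lambda>k. if k = 0 then a 2 + 1 else a (k + 2))"
proof -
  define d where "d = (\<lambda>k. if k = 0 then a 2 + 1 else a (k + 2))"
  define b where "b = (\<lambda>k. a (Suc k))"
  define b2 where "b2 = (\<lambda>k. a (Suc (Suc k)))"
  define b3 where "b3 = (\<lambda>k. a (Suc (Suc (Suc k))))"
  have dp: "\<And>k. d k > 0" using pos by (simp add: d_def)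
  have p1: "\<And>k. b k > 0" using pos by (simp add: b_def)
  have p2: "\<And>k. b2 k > 0" using pos by (simp add: b2_def)
  have db3: "(\<lambda>k. d (Suc k)) = b3" by (rule ext) (simp add: d_def b3_def)
  have bb2: "(\<lambda>k. b (Suc k)) = b2" by (rule ext) (simp add: b_def b2_def)
  have b2b3: "(\<lambda>k. b2 (Suc k)) = b3" by (rule ext) (simp add: b2_def b3_def)
  define s where "s = cfrac b3"
  have s0: "s \<ge> 0" unfolding s_def b3_def by (rule cfrac_nonneg) (rule pos)
  have e1: "cfrac d = 1 / (real (a 2) + 1 + s)"
    using cfrac_rec[of "d", OF dp] unfolding db3 s_def by (simp add: d_def)
  have e2: "cfrac b2 = 1 / (real (a 2) + s)"
    using cfrac_rec[of "b2", OF p2] unfolding b2b3 s_def by (simp add: b2_def numeral_2_eq_2)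
  have e3: "cfrac b = 1 / (1 + cfrac b2)"
    using cfrac_rec[of "b", OF p1] a1 unfolding bb2 by (simp add: b_def)
  have a2r: "real (a 2) \<ge> 1" using pos[of 2] by linarith
  have "Rmap (cfrac a) = 1 - 1 / (1 + 1 / (real (a 2) + s))"
    unfolding Rmap_def gauss_cfrac[of a, OF pos] e3[unfolded b_def] e2 ..
  also have "\<dots> = 1 / (real (a 2) + 1 + s)"
    using a2r s0 by (simp add: field_simps)
  finally show ?thesis unfolding d_def[symmetric] e1 .
qed

lemma inner1:
  assumes pos: "\<And>k. a k > 0"
  shows "1 \<le> l \<Longrightarrow> l < a 1 \<Longrightarrow>
    (Rmap ^^ l) (cfrac a) = cfrac (\<lambda>k. if k = 0 then 1 else if k = 1 then a 1 - l else a k)"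
proof (induction l)
  case 0 then show ?case by simp
next
  case (Suc l)
  show ?case
  proof (cases "l = 0")
    case True
    then have e: "Suc l = 1" by simp
    show ?thesis unfolding e using R1[of a, OF pos] Suc.prems by simp
  next
    case False
    define c where "c = (\<lambda>k. if k = 0 then 1 else if k = 1 then a 1 - l else a k)"
    have IH: "(Rmap ^^ l) (cfrac a) = cfrac c" using Suc.IH Suc.prems False by (simp add: c_def)
    have cp: "\<And>k. c k > 0" using pos Suc.prems by (simp add: c_def)
    have c1: "c 1 \<ge> 2" using Suc.prems by (simp add: c_def)
    have "(Rmap ^^ Suc l) (cfrac a) = Rmap (cfrac c)" using IH by simp
    also have "\<dots> = cfrac (\<lambda>k. if k = 0 then 1 else if k = 1 then c 1 - 1 else c k)"
      by (rule R1[of c, OF cp c1])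
    also have "(\<lambda>k. if k = 0 then 1 else if k = 1 then c 1 - 1 else c k)
       = (\<lambda>k. if k = 0 then 1 else if k = 1 then a 1 - Suc l else a k)"
      by (rule ext) (simp add: c_def)
    finally show ?thesis .
  qed
qed

lemma inner2:
  assumes pos: "\<And>k. a k > 0"
  shows "(Rmap ^^ a 1) (cfrac a) = cfrac (\<lambda>k. if k = 0 then a 2 + 1 else a (k + 2))"
proof (cases "a 1 = 1")
  case True
  then show ?thesis using R2[of a, OF pos] by simp
next
  case False
  then obtain m where m: "a 1 = Suc m" "m \<ge> 1" using pos[of 1]
    by (metis One_nat_def Suc_pred less_one not_less)
  define c where "c = (\<lambda>k. if k = 0 then 1 else if k = 1 then a 1 - m else a k)"
  have I: "(Rmap ^^ m) (cfrac a) = cfrac c" unfolding c_def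
    by (rule inner1[of a, OF pos]) (use m in auto)
  have cp: "\<And>k. c k > 0" using pos m by (simp add: c_def)
  have c1: "c 1 = 1" using m by (simp add: c_def)
  have "(Rmap ^^ a 1) (cfrac a) = Rmap (cfrac c)" using I m by simp
  also have "\<dots> = cfrac (\<lambda>k. if k = 0 then c 2 + 1 else c (k + 2))" by (rule R2[of c, OF cp c1])
  also have "(\<lambda>k. if k = 0 then c 2 + 1 else c (k + 2)) = (\<lambda>k. if k = 0 then a 2 + 1 else a (k + 2))"
    by (rule ext) (simp add: c_def)
  finally show ?thesis .
qed

lemma mainQ:
  fixes x :: real and xs :: "nat \<Rightarrow> nat"
  assumes pos: "\<And>k. k \<ge> 1 \<Longrightarrow> xs k > 0"
    and expn: "x = cfrac (\<lambda>k. xs (Suc k))"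
  shows "(Rmap ^^ (\<Sum>i=1..j. xs (2*i))) x
     = cfrac (\<lambda>k. if k = 0 then (if j = 0 then xs 1 else xs (2*j+1) + 1) else xs (2*j+1+k))"
proof (induction j)
  case 0
  have "(\<lambda>k. xs (Suc k)) = (\<lambda>k. if k = 0 then (if (0::nat) = 0 then xs 1 else xs (2*0+1) + 1) else xs (2*0+1+k))"
    by (rule ext) simp
  then show ?case using expn by simp
next
  case (Suc j)
  define a where "a = (\<lambda>k. if k = 0 then (if j = 0 then xs 1 else xs (2*j+1) + 1) else xs (2*j+1+k))"
  have ap: "\<And>k. a k > 0" using pos by (simp add: a_def)
  have a1: "a 1 = xs (2 * Suc j)" by (simp add: a_def)
  have S: "(\<Sum>i=1..Suc j. xs (2*i)) = xs (2 * Suc j) + (\<Sum>i=1..j. xs (2*i))"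
    by simp
  have IH': "(Rmap ^^ (\<Sum>i=1..j. xs (2*i))) x = cfrac a" using Suc.IH unfolding a_def .
  have "(Rmap ^^ (\<Sum>i=1..Suc j. xs (2*i))) x = (Rmap ^^ xs (2 * Suc j)) ((Rmap ^^ (\<Sum>i=1..j. xs (2*i))) x)"
    unfolding S funpow_add o_apply ..
  also have "\<dots> = (Rmap ^^ a 1) (cfrac a)" unfolding IH' a1 ..
  also have "\<dots> = cfrac (\<lambda>k. if k = 0 then a 2 + 1 else a (k + 2))" by (rule inner2[of a, OF ap])
  also have "(\<lambda>k. if k = 0 then a 2 + 1 else a (k + 2))
     = (\<lambda>k. if k = 0 then (if Suc j = 0 then xs 1 else xs (2*Suc j+1) + 1) else xs (2*Suc j+1+k))"
    by (rule ext) (simp add: a_def)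
  finally show ?case .
qed

theorem lemma3p2:
  fixes x :: real and xs :: "nat \<Rightarrow> nat" and j :: nat
  assumes pos: "\<And>k. k \<ge> 1 \<Longrightarrow> xs k > 0"
    and expn: "x = cfrac (\<lambda>k. xs (Suc k))"
    and j: "j \<ge> 1"
  shows "(Rmap ^^ (\<Sum>i=1..j. xs (2*i))) x
           = cfrac (\<lambda>k. if k = 0 then xs (2*j+1) + 1 else xs (2*j+1+k))
       \<and> (\<forall>l. 0 < l \<and> l < xs (2*j) \<longrightarrow>
           (Rmap ^^ ((\<Sum>i=1..j-1. xs (2*i)) + l)) x
           = cfrac (\<lambda>k. if k = 0 then 1 else if k = 1 then xs (2*j) - l
                         else xs (2*j+k-1)))"
proof
  show "(Rmap ^^ (\<Sum>i=1..j. xs (2*i))) x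
           = cfrac (\<lambda>k. if k = 0 then xs (2*j+1) + 1 else xs (2*j+1+k))"
    using mainQ[OF pos expn, of j] j by simp
next
  obtain j' where jj: "j = Suc j'" using j by (cases j) auto
  show "\<forall>l. 0 < l \<and> l < xs (2*j) \<longrightarrow>
           (Rmap ^^ ((\<Sum>i=1..j-1. xs (2*i)) + l)) x
           = cfrac (\<lambda>k. if k = 0 then 1 else if k = 1 then xs (2*j) - l
                         else xs (2*j+k-1))"
  proof (intro allI impI)
    fix l assume l: "0 < l \<and> l < xs (2*j)"
    define a where "a = (\<lambda>k. if k = 0 then (if j' = 0 then xs 1 else xs (2*j'+1) + 1) else xs (2*j'+1+k))"
    have ap: "\<And>k. a k > 0" using pos by (simp add: a_def)
    have a1: "a 1 = xs (2 * j)" by (simp add: a_def jj)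
    have Q: "(Rmap ^^ (\<Sum>i=1..j'. xs (2*i))) x = cfrac a"
      unfolding a_def by (rule mainQ[OF pos expn])
    have "(Rmap ^^ ((\<Sum>i=1..j-1. xs (2*i)) + l)) x = (Rmap ^^ l) (cfrac a)"
      using Q jj by (simp add: funpow_add add.commute[of _ l])
    also have "\<dots> = cfrac (\<lambda>k. if k = 0 then 1 else if k = 1 then a 1 - l else a k)"
      by (rule inner1[of a, OF ap]) (use l a1 in auto)
    also have "(\<lambda>k. if k = 0 then 1 else if k = 1 then a 1 - l else a k)
       = (\<lambda>k. if k = 0 then 1 else if k = 1 then xs (2*j) - l else xs (2*j+k-1))"
      by (rule ext) (simp add: a_def jj a1)
    finally show "(Rmap ^^ ((\<Sum>i=1..j-1. xs (2*i)) + l)) x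
           = cfrac (\<lambda>k. if k = 0 then 1 else if k = 1 then xs (2*j) - l
                         else xs (2*j+k-1))" .
  qed
qed

end
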